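(* Let $\mu\in\mathbb{R}$, $\sigma^2>0$, and let $f(x)=\frac{1}{x\sqrt{2\pi\sigma^2}}\exp\left\{-\frac{(\log x-\mu)^2}{2\sigma^2}\right\}$ for $x\in(0,\infty)$ be the log-normal density. Then for every real $p\in(0,\infty)$, the number $\nu_p=\exp\left\{\mu+\frac{p-1}{2}\sigma^2\right\}$ satisfies $$\int_0^{\nu_p} y^{p-1} f(\nu_p-y)\,dy=\int_0^{\infty} y^{p-1} f(\nu_p+y)\,dy.$$ *)

theory Defs
  imports "HOL-Analysis.Analysis"
begin

definition lognormal_density :: "real \<Rightarrow> real \<Rightarrow> real \<Rightarrow> real" where
  "lognormal_density mu s2 x =
     (if x > 0 then 1 / (x * sqrt (2 * pi * s2)) * exp (- ((ln x - mu)^2) / (2 * s2)) else 0)"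

end

theory Submission
  imports Defs
begin

lemma h1: "0 < v + z \<Longrightarrow> (v::real) - v * z / (v + z) = v^2 / (v + z)"
proof -
  assume "0 < v + z"
  then have ne: "v + z \<noteq> 0" by simp
  have "v^2 / (v + z) = (v * (v + z) - v * z) / (v + z)" by (simp add: power2_eq_square algebra_simps)
  also have "\<dots> = v - v * z / (v + z)" using ne by (simp add: diff_divide_distrib)
  finally show ?thesis by simp
qed

lemma key:
  fixes mu s2 p z :: real
  assumes s: "s2 > 0" and z: "z > 0"
  defines "\<nu> \<equiv> exp (mu + (p - 1) / 2 * s2)"
  shows "(\<nu> * z / (\<nu> + z)) powr (p - 1) * lognormal_density mu s2 (\<nu> - \<nu> * z / (\<nu> + z)) * (\<nu>^2 / (\<nu> + z)^2)
       = z powr (p - 1) * lognormal_density mu s2 (\<nu> + z)"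
proof -
  define l where "l = mu + (p - 1) / 2 * s2"
  have nu: "\<nu> = exp l" unfolding \<nu>_def l_def ..
  have nup: "\<nu> > 0" unfolding nu by simp
  define w where "w = \<nu> + z"
  have wp: "w > 0" using nup z unfolding w_def by simp
  define lz where "lz = ln z"
  define lw where "lw = ln w"
  have zexp: "z = exp lz" using z unfolding lz_def by simp
  have wexp: "w = exp lw" using wp unfolding lw_def by simp
  have g: "\<nu> * z / (\<nu> + z) = exp (l + lz - lw)"
    unfolding w_def[symmetric] by (simp add: nu zexp wexp exp_add exp_diff)
  have e2: "\<And>t::real. exp (2*t) = exp t * exp t" by (subst mult_2) (rule exp_add)
  have d: "\<nu> - \<nu> * z / (\<nu> + z) = exp (2*l - lw)"
  proof -
    have "\<nu> - \<nu> * z / (\<nu> + z) = \<nu>^2 / w" using wp unfolding w_def by (rule h1)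
    also have "\<dots> = exp (2*l - lw)" by (simp add: nu wexp exp_diff power2_eq_square e2)
    finally show ?thesis .
  qed
  have g': "\<nu>^2 / (\<nu> + z)^2 = exp (2*l - 2*lw)"
    unfolding w_def[symmetric] by (simp add: nu wexp exp_diff power2_eq_square e2)
  define c where "c = sqrt (2 * pi * s2)"
  have cp: "c > 0" unfolding c_def using s by simp
  have comb: "\<And>A B C D. exp A * (1 / (exp B * c) * exp C) * exp D = exp (A - B + C + D) / c"
    by (simp add: exp_add exp_diff)
  have comb2: "\<And>A B C. exp A * (1 / (exp B * c) * exp C) = exp (A - B + C) / c"
    by (simp add: exp_add exp_diff)
  have lhs: "(\<nu> * z / (\<nu> + z)) powr (p - 1) * lognormal_density mu s2 (\<nu> - \<nu> * z / (\<nu> + z)) * (\<nu>^2 / (\<nu> + z)^2)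
     = exp ((p-1)*(l + lz - lw) - (2*l - lw) + (- ((2*l - lw - mu)^2)) / (2 * s2) + (2*l - 2*lw)) / c"
  proof -
    have 1: "(\<nu> * z / (\<nu> + z)) powr (p - 1) = exp ((p-1)*(l + lz - lw))" unfolding g by (simp add: powr_def)
    have 2: "lognormal_density mu s2 (\<nu> - \<nu> * z / (\<nu> + z)) = 1 / (exp (2*l - lw) * c) * exp ((- ((2*l - lw - mu)^2)) / (2 * s2))"
      unfolding d lognormal_density_def c_def[symmetric] by simp
    show ?thesis unfolding 1 2 g' by (rule comb)
  qed
  have rhs: "z powr (p - 1) * lognormal_density mu s2 (\<nu> + z) = exp ((p-1)*lz - lw + (- ((lw - mu)^2)) / (2 * s2)) / c"
  proof -
    have 1: "z powr (p-1) = exp ((p-1)*lz)" using z by (simp add: powr_def lz_def)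
    have 2: "lognormal_density mu s2 (\<nu>+z) = 1/(exp lw * c) * exp ((- ((lw - mu)^2)) / (2 * s2))"
      unfolding lognormal_density_def c_def[symmetric] w_def[symmetric] using wp by (simp add: lw_def[symmetric] wexp[symmetric])
    show ?thesis unfolding 1 2 by (rule comb2)
  qed
  have e: "(p-1)*(l + lz - lw) - (2*l - lw) + (- ((2*l - lw - mu)^2)) / (2 * s2) + (2*l - 2*lw) = (p-1)*lz - lw + (- ((lw - mu)^2)) / (2 * s2)"
    using s unfolding l_def by (simp add: field_simps power2_eq_square)
  show ?thesis unfolding lhs rhs e ..
qed


lemma lognormal_meas[measurable]: "(\<lambda>x. lognormal_density mu s2 (f x)) \<in> borel_measurable borel"
  if [measurable]: "f \<in> borel_measurable borel"
  unfolding lognormal_density_def by measurable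

theorem theorem2:
  fixes mu s2 p :: real
  assumes "s2 > 0" and "p > 0"
  defines "\<nu> \<equiv> exp (mu + (p - 1) / 2 * s2)"
  shows "(\<integral>\<^sup>+ y \<in> {0<..<\<nu>}. ennreal (y powr (p - 1) * lognormal_density mu s2 (\<nu> - y)) \<partial>lborel)
       = (\<integral>\<^sup>+ y \<in> {0<..}. ennreal (y powr (p - 1) * lognormal_density mu s2 (\<nu> + y)) \<partial>lborel)"
proof -
  have nup: "\<nu> > 0" unfolding \<nu>_def by simp
  define k where "k y = y powr (p - 1) * lognormal_density mu s2 (\<nu> - y)" for y
  define h where "h y = y powr (p - 1) * lognormal_density mu s2 (\<nu> + y)" for y
  define g where "g z = \<nu> * z / (\<nu> + z)" for z
  define g' where "g' z = \<nu>^2 / (\<nu> + z)^2" for z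
  define a where "a n = 1 / real (Suc n)" for n
  define b where "b n = real (Suc n)" for n
  have kmeas[measurable]: "k \<in> borel_measurable borel" unfolding k_def by measurable
  have hmeas[measurable]: "h \<in> borel_measurable borel" unfolding h_def by measurable
  have apos: "a n > 0" for n unfolding a_def by simp
  have ab: "a n \<le> b n" for n unfolding a_def b_def by (simp add: field_simps)
  have galt: "g z = \<nu> - \<nu>^2 / (\<nu> + z)" if "z > 0" for z
    using that nup unfolding g_def by (simp add: field_simps power2_eq_square)
  have gmono: "g x \<le> g y" if "0 < x" "x \<le> y" for x y
  proof -
    have "\<nu>^2 / (\<nu> + y) \<le> \<nu>^2 / (\<nu> + x)"
      using that nup by (intro divide_left_mono) auto
    then show ?thesis using that by (simp add: galt)
  qed
  have gpos: "g z > 0" if "z > 0" for z using that nup unfolding g_def by simp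
  have glt: "g z < \<nu>" if "z > 0" for z using that nup by (simp add: galt)
  have key': "k (g z) * g' z = h z" if "z > 0" for z
    unfolding k_def h_def g_def g'_def \<nu>_def by (rule key[OF assms(1) that])
  have S: "(\<integral>\<^sup>+x. k x * indicator {g (a n)..g (b n)} x \<partial>lborel) = (\<integral>\<^sup>+x. h x * indicator {a n..b n} x \<partial>lborel)" for n
  proof -
    have "(\<integral>\<^sup>+x. k x * indicator {g (a n)..g (b n)} x \<partial>lborel) = (\<integral>\<^sup>+x. k (g x) * g' x * indicator {a n..b n} x \<partial>lborel)"
    proof (rule nn_integral_substitution)
      show "set_borel_measurable borel {g (a n)..g (b n)} k" unfolding set_borel_measurable_def by measurable
      show "(g has_real_derivative g' x) (at x)" if "x \<in> {a n..b n}" for x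
      proof -
        have x: "x > 0" using that apos[of n] by auto
        have D: "((\<lambda>z. \<nu> * z / (\<nu> + z)) has_real_derivative (\<nu> * 1 * (\<nu> + x) - \<nu> * x * 1) / ((\<nu> + x) * (\<nu> + x))) (at x)"
          by (rule DERIV_divide) (use x nup in \<open>auto intro!: derivative_eq_intros\<close>)
        have eq: "\<nu>\<^sup>2 / (\<nu> + x)\<^sup>2 = (\<nu> * 1 * (\<nu> + x) - \<nu> * x * 1) / ((\<nu> + x) * (\<nu> + x))"
          by (simp add: power2_eq_square algebra_simps)
        show ?thesis unfolding g_def g'_def eq by (rule D)
      qed
      show "continuous_on {a n..b n} g'" unfolding g'_def
        using apos[of n] nup by (intro continuous_intros) auto
      show "0 \<le> g' x" for x unfolding g'_def by simp
      show "a n \<le> b n" by (rule ab)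
    qed
    also have "\<dots> = (\<integral>\<^sup>+x. h x * indicator {a n..b n} x \<partial>lborel)"
    proof (rule nn_integral_cong)
      fix x show "ennreal (k (g x) * g' x * indicator {a n..b n} x) = ennreal (h x * indicator {a n..b n} x)"
        using key'[of x] apos[of n] by (cases "x \<in> {a n..b n}") auto
    qed
    finally show ?thesis .
  qed
  define M1 where "M1 = density lborel (\<lambda>y. ennreal (k y))"
  define M2 where "M2 = density lborel (\<lambda>y. ennreal (h y))"
  have E1: "emeasure M1 A = (\<integral>\<^sup>+ y \<in> A. ennreal (k y) \<partial>lborel)" if "A \<in> sets borel" for A
    unfolding M1_def by (rule emeasure_density) (simp_all add: that measurable_compose[OF kmeas measurable_ennreal])
  have E2: "emeasure M2 A = (\<integral>\<^sup>+ y \<in> A. ennreal (h y) \<partial>lborel)" if "A \<in> sets borel" for A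
    unfolding M2_def by (rule emeasure_density) (simp_all add: that measurable_compose[OF hmeas measurable_ennreal])
  have ind: "(\<integral>\<^sup>+ y \<in> A. ennreal (f y) \<partial>lborel) = (\<integral>\<^sup>+ y. ennreal (f y * indicator A y) \<partial>lborel)" for f A
    by (rule nn_integral_cong) (simp split: split_indicator)
  have U1: "(\<Union>n. {g (a n)..g (b n)}) = {0<..<\<nu>}"
  proof (intro equalityI subsetI)
    fix y assume "y \<in> (\<Union>n. {g (a n)..g (b n)})"
    then obtain n where "g (a n) \<le> y" "y \<le> g (b n)" by auto
    then show "y \<in> {0<..<\<nu>}" using gpos[OF apos[of n]] glt[of "b n"] unfolding b_def by auto
  next
    fix y assume y: "y \<in> {0<..<\<nu>}"
    define z where "z = \<nu> * y / (\<nu> - y)"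
    have ny: "\<nu> - y > 0" using y by auto
    have zp: "z > 0" unfolding z_def using y ny nup by (intro divide_pos_pos mult_pos_pos) auto
    have gz: "g z = y" using ny nup unfolding z_def g_def by (simp add: field_simps)
    obtain n where n: "max z (1/z) < real n" using reals_Archimedean2 by blast
    have "1 / z < real (Suc n)" using n by simp
    then have "inverse (real (Suc n)) < inverse (1 / z)" using zp by (intro less_imp_inverse_less) auto
    then have "a n \<le> z" unfolding a_def by (simp add: inverse_eq_divide)
    moreover have "z \<le> b n" using n unfolding b_def by auto
    ultimately have "g (a n) \<le> g z" "g z \<le> g (b n)" using gmono[OF apos[of n]] gmono[OF zp] by auto
    then have "g (a n) \<le> y" "y \<le> g (b n)" unfolding gz by auto
    then show "y \<in> (\<Union>n. {g (a n)..g (b n)})" by auto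
  qed
  have U2: "(\<Union>n. {a n..b n}) = {0<..}"
  proof (intro equalityI subsetI)
    fix y assume "y \<in> (\<Union>n. {a n..b n})"
    then obtain n where "y \<in> {a n..b n}" by blast
    then show "y \<in> {0<..}" using apos[of n] by simp
  next
    fix z :: real assume "z \<in> {0<..}"
    then have zp: "z > 0" by auto
    obtain n where n: "max z (1/z) < real n" using reals_Archimedean2 by blast
    have "1 / z < real (Suc n)" using n by simp
    then have "inverse (real (Suc n)) < inverse (1 / z)" using zp by (intro less_imp_inverse_less) auto
    then have "a n \<le> z" unfolding a_def by (simp add: inverse_eq_divide)
    moreover have "z \<le> b n" using n unfolding b_def by auto
    ultimately show "z \<in> (\<Union>n. {a n..b n})" by auto
  qed
  have amono: "a m \<le> a n" if "n \<le> m" for n m using that unfolding a_def by (simp add: frac_le)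
  have bmono: "b n \<le> b m" if "n \<le> m" for n m using that unfolding b_def by simp
  have inc1: "incseq (\<lambda>n. {g (a n)..g (b n)})"
  proof (intro monoI subsetI)
    fix n m :: nat and y assume nm: "n \<le> m" and y: "y \<in> {g (a n)..g (b n)}"
    have "g (a m) \<le> g (a n)" using gmono[OF apos[of m] amono[OF nm]] .
    moreover have "g (b n) \<le> g (b m)" using gmono[of "b n" "b m"] bmono[OF nm] apos[of n] ab[of n] by linarith
    ultimately show "y \<in> {g (a m)..g (b m)}" using y by auto
  qed
  have inc2: "incseq (\<lambda>n. {a n..b n})"
  proof (intro monoI subsetI)
    fix n m :: nat and y assume nm: "n \<le> m" and y: "y \<in> {a n..b n}"
    then show "y \<in> {a m..b m}" using amono[OF nm] bmono[OF nm] by auto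
  qed
  have "(\<integral>\<^sup>+ y \<in> {0<..<\<nu>}. ennreal (k y) \<partial>lborel) = emeasure M1 (\<Union>n. {g (a n)..g (b n)})"
    by (simp add: E1 U1)
  also have "\<dots> = (SUP n. emeasure M1 {g (a n)..g (b n)})"
    by (rule SUP_emeasure_incseq[symmetric]) (use inc1 in \<open>auto simp: M1_def\<close>)
  also have "\<dots> = (SUP n. emeasure M2 {a n..b n})"
    by (simp add: E1 E2 ind S)
  also have "\<dots> = emeasure M2 (\<Union>n. {a n..b n})"
    by (rule SUP_emeasure_incseq) (use inc2 in \<open>auto simp: M2_def\<close>)
  also have "\<dots> = (\<integral>\<^sup>+ y \<in> {0<..}. ennreal (h y) \<partial>lborel)"
    by (simp add: E2 U2)
  finally show ?thesis unfolding k_def h_def .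
qed

end
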